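(* Let $G$ be an oriented graph and $a,b$ positive integers. If $G$ admits a homomorphism to some consistent sub-orientation of the Kneser graph $KG_{a,b}$, then for every positive integer $c$ there exists a consistent sub-orientation $\overrightarrow{KG}_{ac,bc}$ of $KG_{ac,bc}$ such that $G$ admits a homomorphism to $\overrightarrow{KG}_{ac,bc}$.
   Context: An oriented graph is a finite directed graph with no directed cycle of length 1 or 2. A homomorphism of an oriented graph $G$ to an oriented graph $H$ is a map $f:V(G)\to V(H)$ such that $f(x)f(y)$ is an arc of $H$ whenever $xy$ is an arc of $G$. The Kneser graph $KG_{a,b}$ has the $b$-subsets of an $a$-set as vertices, two being adjacent iff they are disjoint. A consistent sub-orientation of $KG_{a,b}$ is an oriented graph whose underlying graph is a subgraph of $KG_{a,b}$ and such that for any two arcs $xy$ and $wz$, $x\cap z\neq\emptyset$ implies $y\cap w=\emptyset$. *)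

theory Defs
  imports Main
begin

definition oriented_graph :: "'v set \<Rightarrow> ('v \<times> 'v) set \<Rightarrow> bool" where
  "oriented_graph V A \<longleftrightarrow> finite V \<and> A \<subseteq> V \<times> V \<and>
     (\<forall>x. (x, x) \<notin> A) \<and> (\<forall>x y. (x, y) \<in> A \<longrightarrow> (y, x) \<notin> A)"

definition oriented_hom ::
  "'v set \<Rightarrow> ('v \<times> 'v) set \<Rightarrow> 'w set \<Rightarrow> ('w \<times> 'w) set \<Rightarrow> ('v \<Rightarrow> 'w) \<Rightarrow> bool" where
  "oriented_hom V A W B f \<longleftrightarrow> f ` V \<subseteq> W \<and> (\<forall>x y. (x, y) \<in> A \<longrightarrow> (f x, f y) \<in> B)"

definition kneser_vertices :: "nat \<Rightarrow> nat \<Rightarrow> nat set set" where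
  "kneser_vertices a b = {S. S \<subseteq> {0..<a} \<and> card S = b}"

definition kneser_adj :: "nat set \<Rightarrow> nat set \<Rightarrow> bool" where
  "kneser_adj S T \<longleftrightarrow> S \<inter> T = {}"

definition consistent_sub_orientation ::
  "nat \<Rightarrow> nat \<Rightarrow> nat set set \<Rightarrow> (nat set \<times> nat set) set \<Rightarrow> bool" where
  "consistent_sub_orientation a b W B \<longleftrightarrow>
     oriented_graph W B \<and> W \<subseteq> kneser_vertices a b \<and>
     (\<forall>x y. (x, y) \<in> B \<longrightarrow> kneser_adj x y) \<and>
     (\<forall>x y w z. (x, y) \<in> B \<longrightarrow> (w, z) \<in> B \<longrightarrow> x \<inter> z \<noteq> {} \<longrightarrow> y \<inter> w = {})"

end

theory Submission
  imports Defs
begin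

definition blow :: "nat \<Rightarrow> nat set \<Rightarrow> nat set" where
  "blow c S = {j. j div c \<in> S}"

lemma blow_inj: "0 < c \<Longrightarrow> blow c S = blow c T \<Longrightarrow> S = T"
proof -
  assume c: "0 < c" and e: "blow c S = blow c T"
  have "\<And>i. i \<in> S \<longleftrightarrow> i * c \<in> blow c S" using c by (simp add: blow_def)
  moreover have "\<And>i. i \<in> T \<longleftrightarrow> i * c \<in> blow c T" using c by (simp add: blow_def)
  ultimately show ?thesis using e by blast
qed

lemma blow_int: "blow c S \<inter> blow c T = blow c (S \<inter> T)"
  by (auto simp: blow_def)

lemma blow_empty: "0 < c \<Longrightarrow> blow c S = {} \<longleftrightarrow> S = {}"
proof
  assume c: "0 < c" and "blow c S = {}"
  then show "S = {}" using c by (auto simp: blow_def) (metis div_mult_self1_is_m)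
qed (simp add: blow_def)

lemma blow_eq_image: "0 < c \<Longrightarrow> blow c S = (\<lambda>(i,k). i*c+k) ` (S \<times> {0..<c})"
proof (intro set_eqI iffI)
  fix j assume c: "0 < c" and "j \<in> blow c S"
  then have "j div c \<in> S" by (simp add: blow_def)
  moreover have "j = (j div c) * c + j mod c" by simp
  ultimately show "j \<in> (\<lambda>(i,k). i*c+k) ` (S \<times> {0..<c})" using c
    by (intro image_eqI[of _ _ "(j div c, j mod c)"]) auto
next
  fix j assume c: "0 < c" and "j \<in> (\<lambda>(i,k). i*c+k) ` (S \<times> {0..<c})"
  then obtain i k where "i \<in> S" "k < c" "j = i*c+k" by auto
  then show "j \<in> blow c S" by (simp add: blow_def)
qed

lemma blow_card: "0 < c \<Longrightarrow> finite S \<Longrightarrow> card (blow c S) = card S * c"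
proof -
  assume c: "0 < c" and f: "finite S"
  have "inj_on (\<lambda>(i,k). i*c+k) (S \<times> {0..<c})"
  proof (rule inj_onI, clarsimp)
    fix i k i' k' assume "k < c" "k' < c" "i*c+k = i'*c+k'"
    then have "(i*c+k) div c = (i'*c+k') div c" "(i*c+k) mod c = (i'*c+k') mod c" by simp_all
    with \<open>k < c\<close> \<open>k' < c\<close> c show "i = i' \<and> k = k'" by simp
  qed
  then show ?thesis using c f by (simp add: blow_eq_image card_image card_cartesian_product)
qed

lemma blow_sub: "0 < c \<Longrightarrow> S \<subseteq> {0..<a} \<Longrightarrow> blow c S \<subseteq> {0..<a*c}"
  by (auto simp: blow_def) (metis atLeastLessThan_iff div_less_iff_less_mult mult.commute subsetD)

theorem theorem2:
  fixes V :: "'v set" and A :: "('v \<times> 'v) set" and a b :: nat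
  assumes "oriented_graph V A" and "0 < a" and "0 < b"
    and "\<exists>W B f. consistent_sub_orientation a b W B \<and> oriented_hom V A W B f"
  shows "\<forall>c::nat. 0 < c \<longrightarrow>
           (\<exists>W B f. consistent_sub_orientation (a * c) (b * c) W B \<and> oriented_hom V A W B f)"
proof (intro allI impI)
  fix c :: nat assume c: "0 < c"
  obtain W B f where cs: "consistent_sub_orientation a b W B" and h: "oriented_hom V A W B f"
    using assms(4) by blast
  define g where "g = blow c"
  have ginj: "\<And>S T. g S = g T \<longleftrightarrow> S = T" using blow_inj[OF c] g_def by blast
  define W' where "W' = g ` W"
  define B' where "B' = (\<lambda>(x,y). (g x, g y)) ` B"
  have B'iff: "(u, v) \<in> B' \<longleftrightarrow> (\<exists>x y. (x,y) \<in> B \<and> u = g x \<and> v = g y)" for u v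
    unfolding B'_def by auto
  from cs have og: "oriented_graph W B" and Wk: "W \<subseteq> kneser_vertices a b"
    and adj: "\<And>x y. (x, y) \<in> B \<Longrightarrow> kneser_adj x y"
    and con: "\<And>x y w z. (x, y) \<in> B \<Longrightarrow> (w, z) \<in> B \<Longrightarrow> x \<inter> z \<noteq> {} \<Longrightarrow> y \<inter> w = {}"
    unfolding consistent_sub_orientation_def by blast+
  have gint: "\<And>S T. g S \<inter> g T = {} \<longleftrightarrow> S \<inter> T = {}"
    unfolding g_def blow_int using blow_empty[OF c] by blast
  have "oriented_graph W' B'"
    using og unfolding oriented_graph_def W'_def B'iff
    by (auto simp: ginj B'_def)
  moreover have "W' \<subseteq> kneser_vertices (a*c) (b*c)"
  proof
    fix u assume "u \<in> W'"
    then obtain S where S: "S \<in> W" "u = g S" by (auto simp: W'_def)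
    with Wk have "S \<subseteq> {0..<a}" "card S = b" by (auto simp: kneser_vertices_def)
    moreover then have "finite S" using finite_subset by blast
    ultimately show "u \<in> kneser_vertices (a*c) (b*c)"
      using S blow_sub[OF c] blow_card[OF c] by (auto simp: kneser_vertices_def g_def)
  qed
  moreover have "\<forall>x y. (x, y) \<in> B' \<longrightarrow> kneser_adj x y"
    using adj gint unfolding B'iff kneser_adj_def by metis
  moreover have "\<forall>x y w z. (x, y) \<in> B' \<longrightarrow> (w, z) \<in> B' \<longrightarrow> x \<inter> z \<noteq> {} \<longrightarrow> y \<inter> w = {}"
    using con gint unfolding B'iff by metis
  ultimately have "consistent_sub_orientation (a*c) (b*c) W' B'"
    unfolding consistent_sub_orientation_def by blast
  moreover have "oriented_hom V A W' B' (g \<circ> f)"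
    using h unfolding oriented_hom_def W'_def B'iff by (auto, blast)
  ultimately show "\<exists>W B f. consistent_sub_orientation (a * c) (b * c) W B \<and> oriented_hom V A W B f"
    by blast
qed

end
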